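(* Let $G=(V,E)$ be a finite simple connected graph with at least one edge, let $s$ be a positive integer, and let $G_s=(V_s,E_s)$ be its $s$-th subdivision graph. Then $$4|E_s|\sum_{e_{ij}\in E_s} d_i d_j-\Big[\sum_{e_{ij}\in E_s}(d_i+d_j)\Big]^2=-\Big[\sum_{e_{uv}\in E}(d_u+d_v-4)\Big]^2,$$ where degrees on the left are taken in $G_s$ and degrees on the right in $G$.
   Context: The $s$-th subdivision graph $G_s$ of $G$ is obtained by inserting $s$ new vertices into each edge of $G$ (replacing each edge by a path with $s$ internal vertices). $d_u$ denotes degree; sums over edges count each edge once. *)

theory Defs
  imports Main
begin

definition simple_graph :: "'a set \<Rightarrow> 'a set set \<Rightarrow> bool" where
  "simple_graph V E \<longleftrightarrow> finite V \<and> (\<forall>e\<in>E. e \<subseteq> V \<and> card e = 2)"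

definition adj :: "'a set set \<Rightarrow> 'a \<Rightarrow> 'a \<Rightarrow> bool" where
  "adj E u v \<longleftrightarrow> {u, v} \<in> E"

definition connected_graph :: "'a set \<Rightarrow> 'a set set \<Rightarrow> bool" where
  "connected_graph V E \<longleftrightarrow> (\<forall>u\<in>V. \<forall>v\<in>V. (adj E)\<^sup>*\<^sup>* u v)"

definition degree :: "'a set set \<Rightarrow> 'a \<Rightarrow> nat" where
  "degree E v = card {e \<in> E. v \<in> e}"

text \<open>An (arbitrary but fixed) orientation of each edge, used to lay out the subdivision path.\<close>
definition end1 :: "'a set \<Rightarrow> 'a" where
  "end1 e = (SOME x. x \<in> e)"

definition end2 :: "'a set \<Rightarrow> 'a" where
  "end2 e = (THE y. y \<in> e \<and> y \<noteq> end1 e)"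

text \<open>The s-th subdivision graph: the old vertices are Inl v, the s new vertices on
  edge e are Inr (e,1), ..., Inr (e,s); each edge e = {u,v} is replaced by the path
  u, (e,1), ..., (e,s), v.\<close>
definition subdiv_verts :: "nat \<Rightarrow> 'a set \<Rightarrow> 'a set set \<Rightarrow> ('a + ('a set \<times> nat)) set" where
  "subdiv_verts s V E = Inl ` V \<union> {Inr (e, i) | e i. e \<in> E \<and> 1 \<le> i \<and> i \<le> s}"

definition subdiv_edges :: "nat \<Rightarrow> 'a set set \<Rightarrow> ('a + ('a set \<times> nat)) set set" where
  "subdiv_edges s E = (\<Union>e\<in>E.
      {{Inl (end1 e), Inr (e, 1)}, {Inr (e, s), Inl (end2 e)}}
      \<union> {{Inr (e, i), Inr (e, Suc i)} | i. 1 \<le> i \<and> i < s})"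

end

theory Submission imports Defs begin

lemma ends:
  assumes "card e = 2"
  shows "end1 e \<in> e" "end2 e \<in> e" "end1 e \<noteq> end2 e" "e = {end1 e, end2 e}"
proof -
  have "\<exists>x y. e = {x, y} \<and> x \<noteq> y" using assms by (simp add: card_2_iff)
  then obtain x y where e: "e = {x, y}" "x \<noteq> y" by blast
  have ex: "\<exists>z. z \<in> e" using e(1) by blast
  have a: "end1 e \<in> e" unfolding end1_def using ex by (rule someI_ex)
  have u: "\<exists>!z. z \<in> e \<and> z \<noteq> end1 e"
  proof (cases "end1 e = x")
    case True
    show ?thesis by (rule ex1I[of _ y]) (use e True in auto)+
  next
    case False
    then have "end1 e = y" using a e(1) by blast
    show ?thesis by (rule ex1I[of _ x]) (use e \<open>end1 e = y\<close> in auto)+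
  qed
  have b: "end2 e \<in> e \<and> end2 e \<noteq> end1 e" unfolding end2_def by (rule theI'[OF u])
  show "end1 e \<in> e" "end2 e \<in> e" "end1 e \<noteq> end2 e" using a b by auto
  have s: "{end1 e, end2 e} \<subseteq> e" using a b by auto
  have c: "card {end1 e, end2 e} = card e" using b assms by auto
  have f: "finite e" using e by auto
  show "e = {end1 e, end2 e}" using card_subset_eq[OF f s c] by simp
qed

definition pe :: "nat \<Rightarrow> 'a set \<Rightarrow> ('a + ('a set \<times> nat)) set set" where
  "pe s e = {{Inl (end1 e), Inr (e, 1)}, {Inr (e, s), Inl (end2 e)}}
      \<union> {{Inr (e, i), Inr (e, Suc i)} | i. 1 \<le> i \<and> i < s}"

lemma subdiv_pe: "subdiv_edges s E = (\<Union>e\<in>E. pe s e)"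
  unfolding subdiv_edges_def pe_def by simp

lemma pe_Inr: "f \<in> pe s e \<Longrightarrow> Inr (e', i) \<in> f \<Longrightarrow> e' = e"
  unfolding pe_def by auto

lemma pe_hasInr: "f \<in> pe s e \<Longrightarrow> \<exists>i. Inr (e, i) \<in> f"
  unfolding pe_def by auto

lemma pe_disj: "e \<noteq> e' \<Longrightarrow> pe s e \<inter> pe s e' = {}"
proof (rule ccontr)
  assume "e \<noteq> e'" "pe s e \<inter> pe s e' \<noteq> {}"
  then obtain f where f: "f \<in> pe s e" "f \<in> pe s e'" by blast
  obtain i where "Inr (e, i) \<in> f" using pe_hasInr[OF f(1)] by blast
  then have "e = e'" using pe_Inr[OF f(2)] by blast
  then show False using \<open>e \<noteq> e'\<close> by simp
qed

lemma pe_finite: "finite (pe s e)"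
proof -
  have "{{Inr (e, i), Inr (e, Suc i)} | i. 1 \<le> i \<and> i < s} = (\<lambda>i. {Inr (e, i), Inr (e, Suc i)}) ` {1..<s}"
    by auto
  then show ?thesis unfolding pe_def by simp
qed

lemma pe_sum:
  assumes "card e = 2" "s \<ge> 1"
  shows "sum g (pe s e) = g {Inl (end1 e), Inr (e, 1)} + g {Inr (e, s), Inl (end2 e)}
     + (\<Sum>i\<in>{1..<s}. g {Inr (e, i), Inr (e, Suc i)})"
proof -
  let ?A = "{Inl (end1 e), Inr (e, 1)}" and ?B = "{Inr (e, s), Inl (end2 e)}"
  let ?C = "\<lambda>i. {Inr (e, i), Inr (e, Suc i)} :: ('a + ('a set \<times> nat)) set"
  have eq: "pe s e = insert ?A (insert ?B (?C ` {1..<s}))" unfolding pe_def by auto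
  have ab: "?A \<noteq> ?B" using ends[OF assms(1)] by (auto simp: doubleton_eq_iff)
  have inj: "inj_on ?C {1..<s}" by (auto simp: inj_on_def doubleton_eq_iff)
  have nA: "?A \<notin> ?C ` {1..<s}" by auto
  have nB: "?B \<notin> ?C ` {1..<s}" by auto
  show ?thesis unfolding eq using ab nA nB inj by (simp add: sum.reindex) (rule add.assoc[symmetric])
qed

lemma card_pe: assumes "card e = 2" "s \<ge> 1" shows "card (pe s e) = s + 1"
  using pe_sum[OF assms, of "\<lambda>_. 1::nat"] assms by simp

lemma pe_cases:
  assumes "f \<in> pe s e"
  shows "f = {Inl (end1 e), Inr (e, 1)} \<or> f = {Inr (e, s), Inl (end2 e)}
            \<or> (\<exists>i. f = {Inr (e, i), Inr (e, Suc i)})"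
  using assms unfolding pe_def by blast

lemma pe_AB: "{Inl (end1 e), Inr (e, 1)} \<in> pe s e" "{Inr (e, s), Inl (end2 e)} \<in> pe s e"
  unfolding pe_def by simp_all

lemma deg_Inl:
  assumes "\<forall>e\<in>E. card e = 2" "finite E"
  shows "degree (subdiv_edges s E) (Inl v) = degree E v"
proof -
  define h where "h e = (if end1 e = v then {Inl (end1 e), Inr (e, 1)} else {Inr (e, s), Inl (end2 e)})" for e
  have h_pe: "h e \<in> pe s e" for e unfolding h_def by (simp only: split: if_split) (blast intro: pe_AB)
  have "{f \<in> subdiv_edges s E. Inl v \<in> f} = h ` {e\<in>E. v \<in> e}"
  proof
    show "{f \<in> subdiv_edges s E. Inl v \<in> f} \<subseteq> h ` {e\<in>E. v \<in> e}"
    proof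
      fix f assume "f \<in> {f \<in> subdiv_edges s E. Inl v \<in> f}"
      then have f: "f \<in> subdiv_edges s E" "Inl v \<in> f" by simp_all
      then obtain e where e: "e \<in> E" "f \<in> pe s e" unfolding subdiv_pe by blast
      note en = ends[OF assms(1)[rule_format, OF e(1)]]
      have "f = {Inl (end1 e), Inr (e, 1)} \<or> f = {Inr (e, s), Inl (end2 e)}
            \<or> (\<exists>i. f = {Inr (e, i), Inr (e, Suc i)})"
        using pe_cases[OF e(2)] .
      then have "(f = {Inl (end1 e), Inr (e, 1)} \<and> v = end1 e) \<or> (f = {Inr (e, s), Inl (end2 e)} \<and> v = end2 e)"
        using f(2) by fastforce
      then have "f = h e \<and> v \<in> e"
      proof
        assume "f = {Inl (end1 e), Inr (e, 1)} \<and> v = end1 e"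
        then show ?thesis using en(1) unfolding h_def by simp
      next
        assume "f = {Inr (e, s), Inl (end2 e)} \<and> v = end2 e"
        then show ?thesis using en(2,3) unfolding h_def by simp
      qed
      then show "f \<in> h ` {e\<in>E. v \<in> e}" using e(1) by blast
    qed
    show "h ` {e\<in>E. v \<in> e} \<subseteq> {f \<in> subdiv_edges s E. Inl v \<in> f}"
    proof (rule image_subsetI)
      fix e assume "e \<in> {e\<in>E. v \<in> e}"
      then have e: "e \<in> E" "v \<in> e" by auto
      note en = ends[OF assms(1)[rule_format, OF e(1)]]
      have v: "v = end1 e \<or> v = end2 e" using e(2) en(4) by (metis insertE empty_iff)
      have "Inl v \<in> h e" using v unfolding h_def by auto
      moreover have "h e \<in> subdiv_edges s E" unfolding subdiv_pe using e(1) h_pe by blast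
      ultimately show "h e \<in> {f \<in> subdiv_edges s E. Inl v \<in> f}" by simp
    qed
  qed
  moreover have "inj_on h {e\<in>E. v \<in> e}"
  proof (rule inj_onI)
    fix x y
    assume xy: "x \<in> {e\<in>E. v \<in> e}" "y \<in> {e\<in>E. v \<in> e}" "h x = h y"
    obtain k where "Inr (x, k) \<in> h x" unfolding h_def by (cases "end1 x = v") auto
    then have "Inr (x, k) \<in> h y" using xy(3) by simp
    then show "x = y" using pe_Inr[OF h_pe] by metis
  qed
  ultimately show ?thesis unfolding degree_def by (metis card_image)
qed

lemma deg_Inr:
  assumes "\<forall>e\<in>E. card e = 2" "e \<in> E" "1 \<le> i" "i \<le> s"
  shows "degree (subdiv_edges s E) (Inr (e, i)) = 2"
proof -
  note en = ends[OF assms(1)[rule_format, OF assms(2)]]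
  have "{f \<in> subdiv_edges s E. Inr (e, i) \<in> f} = {f \<in> pe s e. Inr (e, i) \<in> f}"
    using assms(2) pe_Inr unfolding subdiv_pe by blast
  moreover have "card {f \<in> pe s e. Inr (e, i) \<in> f} = 2"
  proof -
    let ?L = "if i = 1 then {Inl (end1 e), Inr (e, 1)} else {Inr (e, i - 1), Inr (e, i)}"
    let ?R = "if i = s then {Inr (e, s), Inl (end2 e)} else {Inr (e, i), Inr (e, Suc i)}"
    have "{f \<in> pe s e. Inr (e, i) \<in> f} = {?L, ?R}"
      using assms(3,4) unfolding pe_def
      apply (auto split: if_splits)
      done
    moreover have "?L \<noteq> ?R" using assms(3,4) en by (auto simp: doubleton_eq_iff)
    ultimately show ?thesis by simp
  qed
  ultimately show ?thesis unfolding degree_def by simp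
qed

lemma per_edge:
  assumes "\<forall>e\<in>E. card e = 2" "finite E" "e \<in> E" "s \<ge> 1"
  shows "(\<Sum>f\<in>pe s e. \<Prod>x\<in>f. int (degree (subdiv_edges s E) x))
           = 2 * (\<Sum>x\<in>e. int (degree E x)) + 4 * (int s - 1)"
    and "(\<Sum>f\<in>pe s e. \<Sum>x\<in>f. int (degree (subdiv_edges s E) x))
           = (\<Sum>x\<in>e. int (degree E x)) + 4 * int s"
proof -
  have ce: "card e = 2" using assms by blast
  note en = ends[OF ce]
  have De: "(\<Sum>x\<in>e. int (degree E x)) = int (degree E (end1 e)) + int (degree E (end2 e))"
  proof -
    have "(\<Sum>x\<in>e. int (degree E x)) = (\<Sum>x\<in>{end1 e, end2 e}. int (degree E x))"
      by (rule arg_cong[where f="\<lambda>A. \<Sum>x\<in>A. int (degree E x)"]) (rule en(4))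
    then show ?thesis using en(3) by simp
  qed
  have d1: "degree (subdiv_edges s E) (Inr (e, 1)) = 2"
    using deg_Inr[OF assms(1,3)] assms(4) by simp
  have d1': "degree (subdiv_edges s E) (Inr (e, Suc 0)) = 2" using d1 by simp
  have ds: "degree (subdiv_edges s E) (Inr (e, s)) = 2"
    using deg_Inr[OF assms(1,3)] assms(4) by simp
  have di: "\<And>i. i \<in> {1..<s} \<Longrightarrow> degree (subdiv_edges s E) (Inr (e, i)) = 2
       \<and> degree (subdiv_edges s E) (Inr (e, Suc i)) = 2"
    using deg_Inr[OF assms(1,3)] by auto
  have dl: "\<And>v. degree (subdiv_edges s E) (Inl v) = degree E v"
    using deg_Inl[OF assms(1,2)] by blast
  have c: "card {1..<s} = s - 1" by simp
  show "(\<Sum>f\<in>pe s e. \<Prod>x\<in>f. int (degree (subdiv_edges s E) x))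
           = 2 * (\<Sum>x\<in>e. int (degree E x)) + 4 * (int s - 1)"
    unfolding pe_sum[OF ce assms(4)] De using di assms(4)
    by (simp add: d1 d1' ds dl c)
  show "(\<Sum>f\<in>pe s e. \<Sum>x\<in>f. int (degree (subdiv_edges s E) x))
           = (\<Sum>x\<in>e. int (degree E x)) + 4 * int s"
    unfolding pe_sum[OF ce assms(4)] De using di assms(4)
    by (simp add: d1 d1' ds dl c)
qed

theorem lemma3:
  fixes V :: "'a set" and E :: "'a set set" and s :: nat
  assumes "simple_graph V E" and "connected_graph V E" and "E \<noteq> {}" and "s \<ge> 1"
  defines "Es \<equiv> subdiv_edges s E"
  shows "4 * int (card Es) * (\<Sum>e\<in>Es. \<Prod>x\<in>e. int (degree Es x))
           - (\<Sum>e\<in>Es. \<Sum>x\<in>e. int (degree Es x))^2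
         = - ((\<Sum>e\<in>E. (\<Sum>x\<in>e. int (degree E x)) - 4)^2)"
proof -
  have c2: "\<forall>e\<in>E. card e = 2" using assms(1) unfolding simple_graph_def by blast
  have sub: "E \<subseteq> Pow V" using assms(1) unfolding simple_graph_def by blast
  have fV: "finite V" using assms(1) unfolding simple_graph_def by blast
  have fE: "finite E" using finite_subset[OF sub] fV by simp
  have Es: "Es = (\<Union>e\<in>E. pe s e)" unfolding Es_def by (rule subdiv_pe)
  have disj: "\<forall>e\<in>E. \<forall>e'\<in>E. e \<noteq> e' \<longrightarrow> pe s e \<inter> pe s e' = {}" by (simp add: pe_disj)
  have fin: "\<forall>e\<in>E. finite (pe s e)" by (simp add: pe_finite)
  have SU: "sum g Es = (\<Sum>e\<in>E. sum g (pe s e))" for g :: "_ \<Rightarrow> int"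
    unfolding Es by (rule sum.UNION_disjoint[OF fE fin disj])
  define D where "D e = (\<Sum>x\<in>e. int (degree E x))" for e
  define m where "m = int (card E)"
  define A where "A = (\<Sum>e\<in>E. D e)"
  have cEs: "int (card Es) = (int s + 1) * m"
  proof -
    have "card Es = (\<Sum>e\<in>E. card (pe s e))" unfolding Es by (rule card_UN_disjoint[OF fE fin disj])
    also have "\<dots> = (\<Sum>e\<in>E. s + 1)"
      by (rule sum.cong[OF refl]) (use card_pe c2 assms(4) in blast)
    finally show ?thesis unfolding m_def by (simp add: algebra_simps)
  qed
  have P: "(\<Sum>e\<in>Es. \<Prod>x\<in>e. int (degree Es x)) = 2 * A + 4 * (int s - 1) * m"
  proof -
    have "(\<Sum>e\<in>Es. \<Prod>x\<in>e. int (degree Es x)) = (\<Sum>e\<in>E. \<Sum>f\<in>pe s e. \<Prod>x\<in>f. int (degree Es x))"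
      by (rule SU)
    also have "\<dots> = (\<Sum>e\<in>E. 2 * D e + 4 * (int s - 1))"
    proof (rule sum.cong[OF refl])
      fix e assume "e \<in> E"
      show "(\<Sum>f\<in>pe s e. \<Prod>x\<in>f. int (degree Es x)) = 2 * D e + 4 * (int s - 1)"
        unfolding Es_def D_def by (rule per_edge(1)[OF c2 fE \<open>e \<in> E\<close> assms(4)])
    qed
    also have "\<dots> = 2 * A + 4 * (int s - 1) * m"
      unfolding A_def m_def by (simp add: sum.distrib sum_distrib_left)
    finally show ?thesis .
  qed
  have S: "(\<Sum>e\<in>Es. \<Sum>x\<in>e. int (degree Es x)) = A + 4 * int s * m"
  proof -
    have "(\<Sum>e\<in>Es. \<Sum>x\<in>e. int (degree Es x)) = (\<Sum>e\<in>E. \<Sum>f\<in>pe s e. \<Sum>x\<in>f. int (degree Es x))"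
      by (rule SU)
    also have "\<dots> = (\<Sum>e\<in>E. D e + 4 * int s)"
    proof (rule sum.cong[OF refl])
      fix e assume "e \<in> E"
      show "(\<Sum>f\<in>pe s e. \<Sum>x\<in>f. int (degree Es x)) = D e + 4 * int s"
        unfolding Es_def D_def by (rule per_edge(2)[OF c2 fE \<open>e \<in> E\<close> assms(4)])
    qed
    also have "\<dots> = A + 4 * int s * m"
      unfolding A_def m_def by (simp add: sum.distrib sum_distrib_left)
    finally show ?thesis .
  qed
  have R: "(\<Sum>e\<in>E. (\<Sum>x\<in>e. int (degree E x)) - 4) = A - 4 * m"
    unfolding A_def m_def D_def by (simp add: sum_subtractf)
  show ?thesis unfolding cEs P S R by (simp add: algebra_simps power2_eq_square)
qed

end
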